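(* Fix a real number $d$ with $0<d<1$ and let $c(x)=x^d$. For scheduling cost-sharing games with $n$ jobs and cost function $c$, the worst-case price of anarchy is $\Theta\!\left(n^{(1-d)/2}\right)$.
   Context: A game is specified by a cost function $c:\mathbb{Z}_{\ge 0}\to\mathbb{R}_{\ge0}$ (here $c(x)=x^d$, so $c(0)=0$), a time horizon $T$ with time slots $t=1,\dots,T$, and a set $J$ of $n$ jobs, each job $j$ having integer release time $r_j$ and integer deadline $d_j$ with $0<r_j<d_j<T$. An assignment $s$ gives each job $j$ a slot $s_j$ with $r_j\le s_j<d_j$ (the allowed interval $[r_j,d_j)$ of job $j$). The load of slot $t$ is $l_t(s)=|\{j: s_j=t\}|$ and the total cost is $C(s)=\sum_{t=1}^T c(l_t(s))$. Each job on slot $t$ pays the cost share $c(l_t(s))/l_t(s)$. An assignment $s$ is a Nash equilibrium (NE) if for every job $j$ and every slot $t\ne s_j$ with $t\in[r_j,d_j)$: $\frac{c(l_{s_j}(s))}{l_{s_j}(s)}\le \frac{c(l_t(s)+1)}{l_t(s)+1}$. The price of anarchy of a game is $\max_{s \text{ a NE}} C(s)/\min_{s^*} C(s^* )$, the minimum over all assignments; the worst-case price of anarchy for $n$ jobs is the supremum of this over all games with $n$ jobs. *)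

theory Defs
  imports Complex_Main "HOL-Library.Landau_Symbols"
begin

text \<open>Jobs are indexed by 0..<n; job j has release time r j and deadline dl j.
  Time slots are 1..T.\<close>

definition valid_game :: "nat \<Rightarrow> nat \<Rightarrow> (nat \<Rightarrow> nat) \<Rightarrow> (nat \<Rightarrow> nat) \<Rightarrow> bool" where
  "valid_game n T r dl \<longleftrightarrow> (\<forall>j<n. 0 < r j \<and> r j < dl j \<and> dl j < T)"

definition feasible :: "nat \<Rightarrow> (nat \<Rightarrow> nat) \<Rightarrow> (nat \<Rightarrow> nat) \<Rightarrow> (nat \<Rightarrow> nat) \<Rightarrow> bool" where
  "feasible n r dl s \<longleftrightarrow> (\<forall>j<n. r j \<le> s j \<and> s j < dl j)"

definition load :: "nat \<Rightarrow> (nat \<Rightarrow> nat) \<Rightarrow> nat \<Rightarrow> nat" where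
  "load n s t = card {j \<in> {0..<n}. s j = t}"

definition total_cost :: "(nat \<Rightarrow> real) \<Rightarrow> nat \<Rightarrow> nat \<Rightarrow> (nat \<Rightarrow> nat) \<Rightarrow> real" where
  "total_cost c n T s = (\<Sum>t\<in>{1..T}. c (load n s t))"

definition is_NE :: "(nat \<Rightarrow> real) \<Rightarrow> nat \<Rightarrow> (nat \<Rightarrow> nat) \<Rightarrow> (nat \<Rightarrow> nat) \<Rightarrow> (nat \<Rightarrow> nat) \<Rightarrow> bool" where
  "is_NE c n r dl s \<longleftrightarrow> feasible n r dl s \<and>
     (\<forall>j<n. \<forall>t. t \<noteq> s j \<and> r j \<le> t \<and> t < dl j \<longrightarrow>
        c (load n s (s j)) / real (load n s (s j)) \<le> c (load n s t + 1) / real (load n s t + 1))"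

text \<open>Worst-case price of anarchy over all games with n jobs:
  sup over games, NE s and assignments s* of C(s)/C(s*), which equals
  the sup over games of (max over NE of C(s)) / (min over s* of C(s*)).\<close>

definition worst_poa :: "(nat \<Rightarrow> real) \<Rightarrow> nat \<Rightarrow> real" where
  "worst_poa c n = Sup {total_cost c n T s / total_cost c n T s' | T r dl s s'.
      valid_game n T r dl \<and> is_NE c n r dl s \<and> feasible n r dl s'}"

end

theory Submission
  imports Defs
begin


lemma sum_over_jobs:
  assumes "\<forall>j<n. s j \<in> {1..T}"
  shows "(\<Sum>j<n. f (s j)) = (\<Sum>t\<in>{1..T}. real (load n s t) * f t)"
proof -
  have "(\<Sum>t\<in>{1..T}. \<Sum>j\<in>{j. j \<in> {0..<n} \<and> s j = t}. f (s j)) = (\<Sum>j\<in>{0..<n}. f (s j))"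
    by (rule sum.group) (use assms in auto)
  moreover have "(\<Sum>j\<in>{j. j \<in> {0..<n} \<and> s j = t}. f (s j)) = real (load n s t) * f t" for t
  proof -
    have "(\<Sum>j\<in>{j. j \<in> {0..<n} \<and> s j = t}. f (s j)) = (\<Sum>j\<in>{j. j \<in> {0..<n} \<and> s j = t}. f t)"
      by (rule sum.cong) auto
    thus ?thesis by (simp add: load_def)
  qed
  ultimately show ?thesis by (simp add: lessThan_atLeast0 load_def)
qed

lemma cost_as_shares:
  assumes "\<forall>j<n. s j \<in> {1..T}"
  shows "total_cost (\<lambda>x. real x powr d) n T s = (\<Sum>j<n. real (load n s (s j)) powr (d-1))"
proof -
  have "(\<Sum>j<n. real (load n s (s j)) powr (d-1)) = (\<Sum>t\<in>{1..T}. real (load n s t) * real (load n s t) powr (d-1))"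
    by (rule sum_over_jobs[OF assms])
  also have "\<dots> = (\<Sum>t\<in>{1..T}. real (load n s t) powr d)"
  proof (rule sum.cong)
    fix t
    show "real (load n s t) * real (load n s t) powr (d-1) = real (load n s t) powr d"
    proof (cases "load n s t = 0")
      case False
      hence "real (load n s t) > 0" by simp
      thus ?thesis by (simp add: powr_diff)
    qed simp
  qed simp
  finally show ?thesis by (simp add: total_cost_def)
qed

lemma sum_loads:
  assumes "\<forall>j<n. s j \<in> {1..T}"
  shows "(\<Sum>t\<in>{1..T}. real (load n s t)) = real n"
  using sum_over_jobs[OF assms, of "\<lambda>_. 1"] by simp

lemma load_pos:
  assumes "j < n" shows "load n s (s j) \<ge> 1"
proof -
  have "{i \<in> {0..<n}. s i = s j} \<noteq> {}" using assms by auto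
  thus ?thesis unfolding load_def by (simp add: Suc_le_eq card_gt_0_iff)
qed

lemma NE_load:
  assumes "is_NE (\<lambda>x. real x powr d) n r dl s" "d < 1" "j < n" "t \<noteq> s j" "r j \<le> t" "t < dl j"
  shows "load n s t < load n s (s j)"
proof (rule ccontr)
  assume "\<not> ?thesis"
  hence le: "real (load n s (s j)) < real (load n s t + 1)" by simp
  have p: "real (load n s (s j)) > 0" using load_pos[of j n s, OF assms(3)] by simp
  have "real (load n s t + 1) powr (d-1) < real (load n s (s j)) powr (d-1)"
    by (rule powr_less_mono2_neg) (use assms(2) le p in auto)
  moreover have "real (load n s (s j)) powr d / real (load n s (s j)) \<le> real (load n s t + 1) powr d / real (load n s t + 1)"
    using assms unfolding is_NE_def by blast
  moreover have "real (load n s (s j)) powr d / real (load n s (s j)) = real (load n s (s j)) powr (d-1)"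
    using p by (simp add: powr_diff)
  moreover have "real (load n s t + 1) powr d / real (load n s t + 1) = real (load n s t + 1) powr (d-1)"
    by (simp add: powr_diff del: of_nat_Suc)
  ultimately show False by linarith
qed



lemma group_bound:
  assumes NE: "is_NE (\<lambda>x. real x powr d) n r dl s" and d0: "0 < d" and d1: "d < 1"
    and feas: "feasible n r dl s'"
  shows "(\<Sum>j\<in>{j\<in>{0..<n}. s' j = \<tau>}. real (load n s (s j)) powr (d-1))
          \<le> 4 * real (card {j\<in>{0..<n}. s' j = \<tau>}) powr ((1+d)/2)"
proof -
  define G where "G = {j\<in>{0..<n}. s' j = \<tau>}"
  define m where "m = real (card G)"
  define a where "a = m powr (1/2)"
  define l where "l = (\<lambda>p. load n s p)"
  have finG: "finite G" unfolding G_def by simp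
  show ?thesis
  proof (cases "G = {}")
    case True thus ?thesis unfolding G_def by (simp only:) simp
  next
    case False
    hence m1: "m \<ge> 1" unfolding m_def using finG by (simp add: Suc_le_eq card_gt_0_iff)
    have a1: "a \<ge> 1" unfolding a_def using m1 by (simp add: ge_one_powr_ge_zero)
    have A1: "m * a powr (d-1) = m powr ((1+d)/2)"
    proof -
      have "m * a powr (d-1) = m powr 1 * m powr ((d-1)/2)" unfolding a_def using m1 by (simp add: powr_powr)
      also have "\<dots> = m powr ((1+d)/2)" by (subst powr_add[symmetric]) (simp add: field_simps)
      finally show ?thesis .
    qed
    have A2: "a * a powr d = m powr ((1+d)/2)"
    proof -
      have "a * a powr d = m powr (1/2) * m powr (d/2)" unfolding a_def using m1 by (simp add: powr_powr)
      also have "\<dots> = m powr ((1+d)/2)" by (subst powr_add[symmetric]) (simp add: field_simps)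
      finally show ?thesis .
    qed
    define f where "f = (\<lambda>j. real (l (s j)) powr (d-1))"
    define G1 where "G1 = {j\<in>G. real (l (s j)) \<ge> a}"
    define G2 where "G2 = {j\<in>G. real (l (s j)) < a}"
    have GU: "G = G1 \<union> G2" and disj: "G1 \<inter> G2 = {}" unfolding G1_def G2_def by auto
    have fin1: "finite G1" "finite G2" using finG unfolding G1_def G2_def by auto
    have split: "sum f G = sum f G1 + sum f G2"
      unfolding GU by (rule sum.union_disjoint[OF fin1 disj])
    have jobs: "j < n" "s' j = \<tau>" if "j \<in> G" for j using that unfolding G_def by auto
    have lpos: "l (s j) \<ge> 1" if "j \<in> G" for j using load_pos jobs[OF that] unfolding l_def by blast
    have S1: "sum f G1 \<le> m powr ((1+d)/2)"
    proof -
      have "sum f G1 \<le> sum (\<lambda>_. a powr (d-1)) G1"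
      proof (rule sum_mono)
        fix j assume j: "j \<in> G1"
        hence "real (l (s j)) \<ge> a" unfolding G1_def by auto
        thus "f j \<le> a powr (d-1)" unfolding f_def
          by (intro powr_mono2') (use d1 a1 in auto)
      qed
      also have "\<dots> = real (card G1) * a powr (d-1)" by simp
      also have "\<dots> \<le> m * a powr (d-1)"
        unfolding m_def by (intro mult_right_mono) (auto intro!: card_mono finG simp: G1_def)
      finally show ?thesis using A1 by simp
    qed
    define S where "S = s ` G2"
    have finS: "finite S" unfolding S_def using fin1 by simp
    have S2a: "sum f G2 = (\<Sum>p\<in>S. real (card {j\<in>G2. s j = p}) * real (l p) powr (d-1))"
    proof -
      have "(\<Sum>p\<in>S. \<Sum>j\<in>{j. j\<in>G2 \<and> s j = p}. f j) = sum f G2"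
        by (rule sum.group) (use fin1 finS in \<open>auto simp: S_def\<close>)
      moreover have "(\<Sum>j\<in>{j. j\<in>G2 \<and> s j = p}. f j) = real (card {j\<in>G2. s j = p}) * real (l p) powr (d-1)" for p
      proof -
        have "(\<Sum>j\<in>{j. j\<in>G2 \<and> s j = p}. f j) = (\<Sum>j\<in>{j. j\<in>G2 \<and> s j = p}. real (l p) powr (d-1))"
          by (rule sum.cong) (auto simp: f_def)
        thus ?thesis by simp
      qed
      ultimately show ?thesis by simp
    qed
    have S2b: "sum f G2 \<le> real (card S) * a powr d"
    proof -
      have "sum f G2 \<le> (\<Sum>p\<in>S. a powr d)"
        unfolding S2a
      proof (rule sum_mono)
        fix p assume p: "p \<in> S"
        then obtain j where j: "j \<in> G2" "s j = p" unfolding S_def by auto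
        have lp: "l p \<ge> 1" "real (l p) < a" using j lpos unfolding G2_def by auto
        have "card {j\<in>G2. s j = p} \<le> l p"
          unfolding l_def load_def G2_def G_def by (rule card_mono) auto
        hence "real (card {j\<in>G2. s j = p}) * real (l p) powr (d-1) \<le> real (l p) * real (l p) powr (d-1)"
          by (intro mult_right_mono) auto
        also have "\<dots> = real (l p) powr d" using lp by (simp add: powr_diff)
        also have "\<dots> \<le> a powr d" using lp d0 by (intro powr_mono2) auto
        finally show "real (card {j\<in>G2. s j = p}) * real (l p) powr (d-1) \<le> a powr d" .
      qed
      thus ?thesis by simp
    qed
    have key: "l p' < l p" if pS: "p \<in> S" and "p' \<noteq> p" and
       iv: "(p < p' \<and> p' < \<tau>) \<or> (\<tau> < p' \<and> p' < p)" for p p'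
    proof -
      obtain j where j: "j \<in> G2" "s j = p" using pS unfolding S_def by auto
      have jG: "j \<in> G" using j unfolding G2_def by auto
      have "r j \<le> s' j" "s' j < dl j" using feas jobs[OF jG] unfolding feasible_def by auto
      moreover have "r j \<le> s j" "s j < dl j" using NE jobs[OF jG] unfolding is_NE_def feasible_def by auto
      ultimately have "r j \<le> p'" "p' < dl j" using iv j jobs[OF jG] by auto
      moreover have "p' \<noteq> s j" using j that(2) by simp
      ultimately show ?thesis unfolding l_def using NE_load[OF NE d1 jobs(1)[OF jG], of p'] j(2) by simp
    qed
    define Sl where "Sl = {p\<in>S. p < \<tau>}"
    define Sr where "Sr = {p\<in>S. \<tau> < p}"
    have Ssub: "S \<subseteq> Sl \<union> Sr \<union> {\<tau>}" unfolding Sl_def Sr_def by auto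
    have lS: "l p \<in> {1..nat \<lfloor>a\<rfloor>}" if pS: "p \<in> S" for p
    proof -
      obtain j where j: "j \<in> G2" "s j = p" using pS unfolding S_def by auto
      have "l p \<ge> 1" "real (l p) < a" using j lpos unfolding G2_def by auto
      thus ?thesis by (auto simp: le_nat_floor)
    qed
    have cardSl: "card Sl \<le> nat \<lfloor>a\<rfloor>"
    proof -
      have "inj_on l Sl"
      proof (rule inj_onI)
        fix p q assume pq: "p \<in> Sl" "q \<in> Sl" "l p = l q"
        show "p = q"
        proof (rule ccontr)
          assume ne: "p \<noteq> q"
          show False
          proof (cases "p < q")
            case True thus False using key[of p q] pq ne unfolding Sl_def by auto
          next
            case False thus False using key[of q p] pq ne unfolding Sl_def by auto
          qed
        qed
      qed
      hence "card Sl = card (l ` Sl)" by (simp add: card_image)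
      also have "\<dots> \<le> card {1..nat \<lfloor>a\<rfloor>}" by (rule card_mono) (use lS in \<open>auto simp: Sl_def\<close>)
      finally show ?thesis by simp
    qed
    have cardSr: "card Sr \<le> nat \<lfloor>a\<rfloor>"
    proof -
      have "inj_on l Sr"
      proof (rule inj_onI)
        fix p q assume pq: "p \<in> Sr" "q \<in> Sr" "l p = l q"
        show "p = q"
        proof (rule ccontr)
          assume ne: "p \<noteq> q"
          show False
          proof (cases "p < q")
            case True thus False using key[of q p] pq ne unfolding Sr_def by auto
          next
            case False thus False using key[of p q] pq ne unfolding Sr_def by auto
          qed
        qed
      qed
      hence "card Sr = card (l ` Sr)" by (simp add: card_image)
      also have "\<dots> \<le> card {1..nat \<lfloor>a\<rfloor>}" by (rule card_mono) (use lS in \<open>auto simp: Sr_def\<close>)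
      finally show ?thesis by simp
    qed
    have "card S \<le> card (Sl \<union> Sr \<union> {\<tau>})" by (rule card_mono) (use Ssub finS in \<open>auto simp: Sl_def Sr_def\<close>)
    also have "\<dots> \<le> card Sl + card Sr + 1"
    proof -
      have "card (Sl \<union> Sr \<union> {\<tau>}) \<le> card (Sl \<union> Sr) + card {\<tau>}" by (rule card_Un_le)
      moreover have "card (Sl \<union> Sr) \<le> card Sl + card Sr" by (rule card_Un_le)
      ultimately show ?thesis by simp
    qed
    finally have "card S \<le> 2 * nat \<lfloor>a\<rfloor> + 1" using cardSl cardSr by linarith
    hence "real (card S) \<le> 2 * real (nat \<lfloor>a\<rfloor>) + 1" by linarith
    moreover have "real (nat \<lfloor>a\<rfloor>) \<le> a" using a1 by linarith
    ultimately have cS: "real (card S) \<le> 3 * a" using a1 by linarith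
    have "sum f G2 \<le> 3 * (a * a powr d)"
      using S2b mult_right_mono[OF cS, of "a powr d"] by simp
    hence S2: "sum f G2 \<le> 3 * m powr ((1+d)/2)" using A2 by simp
    have "sum f G \<le> 4 * m powr ((1+d)/2)" using split S1 S2 by linarith
    thus ?thesis unfolding f_def l_def m_def G_def by simp
  qed
qed



lemma upper_bound:
  assumes d0: "0 < d" and d1: "d < 1" and V: "valid_game n T r dl"
    and NE: "is_NE (\<lambda>x. real x powr d) n r dl s" and F: "feasible n r dl s'"
  shows "total_cost (\<lambda>x. real x powr d) n T s \<le> 4 * real n powr ((1-d)/2) * total_cost (\<lambda>x. real x powr d) n T s'"
proof -
  have sT: "\<forall>j<n. s j \<in> {1..T}"
  proof (intro allI impI)
    fix j assume j: "j < n"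
    have "0 < r j" "dl j < T" using V j unfolding valid_game_def by auto
    moreover have "r j \<le> s j" "s j < dl j" using NE j unfolding is_NE_def feasible_def by auto
    ultimately show "s j \<in> {1..T}" by simp
  qed
  have s'T: "\<forall>j<n. s' j \<in> {1..T}"
  proof (intro allI impI)
    fix j assume j: "j < n"
    have "0 < r j" "dl j < T" using V j unfolding valid_game_def by auto
    moreover have "r j \<le> s' j" "s' j < dl j" using F j unfolding feasible_def by auto
    ultimately show "s' j \<in> {1..T}" by simp
  qed
  define f where "f = (\<lambda>j. real (load n s (s j)) powr (d-1))"
  have "total_cost (\<lambda>x. real x powr d) n T s = (\<Sum>j\<in>{0..<n}. f j)"
    using cost_as_shares[OF sT] by (simp add: f_def lessThan_atLeast0)
  also have "\<dots> = (\<Sum>\<tau>\<in>{1..T}. \<Sum>j\<in>{j. j\<in>{0..<n} \<and> s' j = \<tau>}. f j)"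
    by (rule sum.group[symmetric]) (use s'T in auto)
  also have "\<dots> \<le> (\<Sum>\<tau>\<in>{1..T}. 4 * real n powr ((1-d)/2) * real (load n s' \<tau>) powr d)"
  proof (rule sum_mono)
    fix \<tau>
    define m where "m = real (load n s' \<tau>)"
    have mn: "m \<le> real n" unfolding m_def load_def
      using card_mono[of "{0..<n}" "{j \<in> {0..<n}. s' j = \<tau>}"] by fastforce
    have "(\<Sum>j\<in>{j. j\<in>{0..<n} \<and> s' j = \<tau>}. f j) \<le> 4 * m powr ((1+d)/2)"
      using group_bound[OF NE d0 d1 F, of \<tau>] unfolding f_def m_def load_def by simp
    also have "m powr ((1+d)/2) = m powr d * m powr ((1-d)/2)"
      by (subst powr_add[symmetric]) (simp add: field_simps)
    also have "\<dots> \<le> m powr d * real n powr ((1-d)/2)"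
      by (intro mult_left_mono powr_mono2) (use mn d1 m_def in auto)
    finally show "(\<Sum>j\<in>{j. j\<in>{0..<n} \<and> s' j = \<tau>}. f j) \<le> 4 * real n powr ((1-d)/2) * real (load n s' \<tau>) powr d"
      unfolding m_def by (simp add: mult_ac)
  qed
  also have "\<dots> = 4 * real n powr ((1-d)/2) * total_cost (\<lambda>x. real x powr d) n T s'"
    unfolding total_cost_def by (simp add: sum_distrib_left)
  finally show ?thesis .
qed

lemma ratio_upper:
  assumes d0: "0 < d" and d1: "d < 1" and V: "valid_game n T r dl"
    and NE: "is_NE (\<lambda>x. real x powr d) n r dl s" and F: "feasible n r dl s'"
  shows "total_cost (\<lambda>x. real x powr d) n T s / total_cost (\<lambda>x. real x powr d) n T s' \<le> 4 * real n powr ((1-d)/2)"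
proof -
  have nn: "total_cost (\<lambda>x. real x powr d) n T s' \<ge> 0" unfolding total_cost_def by (intro sum_nonneg) auto
  show ?thesis
  proof (cases "total_cost (\<lambda>x. real x powr d) n T s' = 0")
    case True thus ?thesis by simp
  next
    case False
    hence "total_cost (\<lambda>x. real x powr d) n T s' > 0" using nn by simp
    thus ?thesis using upper_bound[OF assms] by (simp add: divide_le_eq)
  qed
qed



definition tri :: "nat \<Rightarrow> nat" where "tri i = i * (i + 1) div 2"

lemma tri_Suc: "tri (Suc i) = tri i + Suc i"
  unfolding tri_def by (induction i) auto

lemma tri_0[simp]: "tri 0 = 0" unfolding tri_def by simp

lemma tri_mono: "a \<le> b \<Longrightarrow> tri a \<le> tri b"
  by (induction b) (auto simp: tri_Suc le_Suc_eq)

lemma tri_double: "2 * tri i = i * (i + 1)"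
  by (induction i) (auto simp: tri_Suc)

lemma tri_exists: "\<exists>k. tri k \<le> n \<and> n < tri (Suc k)"
proof (induction n)
  case 0 show ?case by (rule exI[of _ 0]) (simp add: tri_Suc)
next
  case (Suc n)
  then obtain k where k: "tri k \<le> n" "n < tri (Suc k)" by blast
  show ?case
  proof (cases "Suc n < tri (Suc k)")
    case True thus ?thesis using k by (intro exI[of _ k]) auto
  next
    case False
    hence "Suc n = tri (Suc k)" using k by simp
    thus ?thesis by (intro exI[of _ "Suc k"]) (simp add: tri_Suc)
  qed
qed

lemma least_tri:
  assumes "1 \<le> i" "tri (i - 1) \<le> j" "j < tri i"
  shows "(LEAST x. j < tri x) = i"
proof (rule Least_equality)
  show "j < tri i" by fact
  fix y assume "j < tri y"
  show "i \<le> y"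
  proof (rule ccontr)
    assume "\<not> i \<le> y"
    hence "y \<le> i - 1" by simp
    hence "tri y \<le> tri (i - 1)" by (rule tri_mono)
    thus False using assms \<open>j < tri y\<close> by simp
  qed
qed

lemma least_tri_props:
  "j < tri (LEAST x. j < tri x)" "1 \<le> (LEAST x. j < tri x)"
  "(LEAST x. j < tri x) \<le> i \<or> tri i \<le> j"
proof -
  have ex: "j < tri (Suc j)" by (simp add: tri_Suc)
  show "j < tri (LEAST x. j < tri x)" by (rule LeastI[of "\<lambda>x. j < tri x", OF ex])
  show "1 \<le> (LEAST x. j < tri x)"
  proof (rule ccontr)
    assume "\<not> ?thesis"
    hence "(LEAST x. j < tri x) = 0" by simp
    thus False using LeastI[of "\<lambda>x. j < tri x", OF ex] by simp
  qed
  show "(LEAST x. j < tri x) \<le> i \<or> tri i \<le> j"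
    using Least_le[of "\<lambda>x. j < tri x" i] by linarith
qed



lemma lower_example:
  assumes d0: "0 < d" and d1: "d < 1" and n1: "1 \<le> n"
  shows "\<exists>T r dl s s'. valid_game n T r dl \<and> is_NE (\<lambda>x. real x powr d) n r dl s \<and> feasible n r dl s' \<and>
     8 powr ((d-1)/2) * real n powr ((1-d)/2) \<le> total_cost (\<lambda>x. real x powr d) n T s / total_cost (\<lambda>x. real x powr d) n T s'"
proof -
  obtain k where k: "tri k \<le> n" "n < tri (Suc k)" using tri_exists by blast
  have k1: "1 \<le> k"
  proof (rule ccontr)
    assume "\<not> 1 \<le> k" hence "k = 0" by simp
    thus False using k n1 by (simp add: tri_Suc)
  qed
  have trik: "tri (k-1) + k = tri k" using tri_Suc[of "k-1"] k1 by simp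
  define lev where "lev j = (if tri (k-1) \<le> j then k else (LEAST x. j < tri x))" for j
  define s where "s j = lev j + 1" for j
  define r :: "nat \<Rightarrow> nat" where "r j = 1" for j
  define dl where "dl j = lev j + 2" for j
  define s' :: "nat \<Rightarrow> nat" where "s' j = 1" for j
  define T where "T = k + 3"
  have lev_range: "1 \<le> lev j \<and> lev j \<le> k" for j
  proof (cases "tri (k-1) \<le> j")
    case True thus ?thesis using k1 by (simp add: lev_def)
  next
    case False thus ?thesis using least_tri_props[of j] least_tri_props(3)[of j "k-1"] k1
      by (auto simp: lev_def)
  qed
  have L1: "load n s (i+1) = i" if i: "1 \<le> i" "i < k" for i
  proof -
    have "{j\<in>{0..<n}. s j = i+1} = {tri (i-1)..<tri i}"
    proof (intro set_eqI iffI)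
      fix j assume j: "j \<in> {j\<in>{0..<n}. s j = i+1}"
      hence lj: "lev j = i" by (simp add: s_def)
      hence nt: "\<not> tri (k-1) \<le> j" using i unfolding lev_def by auto
      hence le: "(LEAST x. j < tri x) = i" using lj unfolding lev_def by simp
      show "j \<in> {tri (i-1)..<tri i}"
        using least_tri_props(1)[of j] least_tri_props(3)[of j "i-1"] le i by auto
    next
      fix j assume j: "j \<in> {tri (i-1)..<tri i}"
      have "tri i \<le> tri (k-1)" using i by (intro tri_mono) simp
      moreover have "tri (k-1) \<le> n" using trik k by simp
      ultimately have "j < tri (k-1)" "j < n" using j by auto
      moreover have "(LEAST x. j < tri x) = i" using j i by (intro least_tri) auto
      ultimately show "j \<in> {j\<in>{0..<n}. s j = i+1}" by (simp add: s_def lev_def)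
    qed
    hence "load n s (i+1) = tri i - tri (i-1)" unfolding load_def by simp
    also have "\<dots> = i" using tri_Suc[of "i-1"] i by simp
    finally show ?thesis .
  qed
  have L2: "load n s (k+1) = n - tri (k-1)"
  proof -
    have "{j\<in>{0..<n}. s j = k+1} = {tri (k-1)..<n}"
    proof (intro set_eqI iffI)
      fix j assume j: "j \<in> {j\<in>{0..<n}. s j = k+1}"
      hence lj: "lev j = k" by (simp add: s_def)
      have "tri (k-1) \<le> j"
      proof (rule ccontr)
        assume nt: "\<not> tri (k-1) \<le> j"
        hence "(LEAST x. j < tri x) = k" using lj unfolding lev_def by simp
        thus False using least_tri_props(3)[of j "k-1"] nt k1 by simp
      qed
      thus "j \<in> {tri (k-1)..<n}" using j by simp
    next
      fix j assume "j \<in> {tri (k-1)..<n}"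
      thus "j \<in> {j\<in>{0..<n}. s j = k+1}" by (simp add: s_def lev_def)
    qed
    thus ?thesis unfolding load_def by simp
  qed
  have L3: "load n s t = 0" if "t \<le> 1 \<or> k + 1 < t" for t
  proof -
    have "{j\<in>{0..<n}. s j = t} = {}"
    proof (rule equals0I)
      fix j assume "j \<in> {j\<in>{0..<n}. s j = t}"
      hence "lev j + 1 = t" by (simp add: s_def)
      thus False using lev_range[of j] that by linarith
    qed
    thus ?thesis unfolding load_def by simp
  qed
  have Lk: "k \<le> load n s (k+1)" "load n s (k+1) \<le> 2 * k"
    using L2 trik k by (auto simp: tri_Suc)
  have Lmax: "load n s t \<le> 2 * k" for t
  proof -
    consider "t \<le> 1 \<or> k + 1 < t" | "2 \<le> t \<and> t \<le> k" | "t = k + 1" by linarith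
    thus ?thesis
    proof cases
      case 1 thus ?thesis using L3 by simp
    next
      case 2
      hence "load n s (t-1+1) = t-1" using L1[of "t-1"] by linarith
      moreover have "t-1+1 = t" using 2 by simp
      ultimately have "load n s t = t - 1" by simp
      thus ?thesis using 2 by linarith
    next
      case 3 thus ?thesis using Lk by simp
    qed
  qed
  have Lt: "load n s t + 1 \<le> t" if "1 \<le> t" "t \<le> k" for t
  proof (cases "t = 1")
    case True thus ?thesis using L3 by simp
  next
    case False
    hence "load n s (t-1+1) = t-1" using L1[of "t-1"] that by linarith
    moreover have "t-1+1 = t" using that by simp
    ultimately have "load n s t = t - 1" by simp
    thus ?thesis using False that by linarith
  qed
  have Lp: "lev j \<le> load n s (s j)" for j
  proof (cases "lev j = k")
    case True thus ?thesis using Lk by (simp add: s_def)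
  next
    case False thus ?thesis using L1[of "lev j"] lev_range[of j] by (simp add: s_def)
  qed
  have V: "valid_game n T r dl" unfolding valid_game_def T_def r_def dl_def using lev_range by (auto simp: less_Suc_eq_le)
  have Fs: "feasible n r dl s" unfolding feasible_def r_def dl_def s_def using lev_range by (auto simp: less_Suc_eq_le)
  have Fs': "feasible n r dl s'" unfolding feasible_def r_def dl_def s'_def using lev_range by (auto simp: less_Suc_eq_le)
  have NE: "is_NE (\<lambda>x. real x powr d) n r dl s"
    unfolding is_NE_def
  proof (intro conjI Fs allI impI)
    fix j t assume j: "j < n" and t: "t \<noteq> s j \<and> r j \<le> t \<and> t < dl j"
    hence t1: "1 \<le> t" "t \<le> lev j" using t by (auto simp: r_def dl_def s_def)
    have "load n s t + 1 \<le> lev j"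
      using Lt[of t] t1 lev_range[of j] by linarith
    hence le: "load n s t + 1 \<le> load n s (s j)" using Lp[of j] by linarith
    define x where "x = real (load n s t + 1)"
    define y where "y = real (load n s (s j))"
    have xy: "1 \<le> x" "x \<le> y" using le unfolding x_def y_def by auto
    have "y powr d / y = y powr (d-1)" using xy by (simp add: powr_diff)
    also have "\<dots> \<le> x powr (d-1)" using xy d1 by (intro powr_mono2') auto
    also have "\<dots> = x powr d / x" using xy by (simp add: powr_diff)
    finally show "real (load n s (s j)) powr d / real (load n s (s j))
        \<le> real (load n s t + 1) powr d / real (load n s t + 1)" unfolding x_def y_def .
  qed
  have sT: "\<forall>j<n. s j \<in> {1..T}"
  proof (intro allI impI)
    fix j show "s j \<in> {1..T}" using lev_range[of j] by (simp add: s_def T_def)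
  qed
  have s'T: "\<forall>j<n. s' j \<in> {1..T}" by (auto simp: s'_def T_def)
  have C1: "total_cost (\<lambda>x. real x powr d) n T s \<ge> real n * real (2*k) powr (d-1)"
  proof -
    have "real n * real (2*k) powr (d-1) = (\<Sum>j<n. real (2*k) powr (d-1))" by simp
    also have "\<dots> \<le> (\<Sum>j<n. real (load n s (s j)) powr (d-1))"
    proof (rule sum_mono)
      fix j assume "j \<in> {..<n}"
      hence "1 \<le> load n s (s j)" using load_pos by auto
      thus "real (2*k) powr (d-1) \<le> real (load n s (s j)) powr (d-1)"
        using Lmax[of "s j"] d1 by (intro powr_mono2') auto
    qed
    also have "\<dots> = total_cost (\<lambda>x. real x powr d) n T s" using cost_as_shares[OF sT] by simp
    finally show ?thesis .
  qed
  have C2: "total_cost (\<lambda>x. real x powr d) n T s' = real n powr d"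
  proof -
    have ld: "load n s' (s' j) = n" for j unfolding load_def s'_def by simp
    have "total_cost (\<lambda>x. real x powr d) n T s' = real n * real n powr (d-1)"
      using cost_as_shares[OF s'T] by (simp add: ld)
    also have "\<dots> = real n powr d" using n1 by (simp add: powr_diff)
    finally show ?thesis .
  qed
  have npos: "real n > 0" using n1 by simp
  have kk: "real (2*k) ^ 2 \<le> 8 * real n"
  proof -
    have "k * k \<le> k * (k+1)" by simp
    also have "\<dots> = 2 * tri k" by (simp add: tri_double)
    also have "\<dots> \<le> 2 * n" using k by simp
    finally have "k * k \<le> 2 * n" .
    hence "real (k * k) \<le> real (2 * n)" by (simp only: of_nat_le_iff)
    hence "real k * real k \<le> 2 * real n" by simp
    thus ?thesis by (simp add: power2_eq_square)
  qed
  have kpos: "real (2*k) > 0" using k1 by simp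
  have P1: "real (2*k) powr (d-1) \<ge> (8 * real n) powr ((d-1)/2)"
  proof -
    have e1: "(real (2*k) powr 2) powr ((d-1)/2) = real (2*k) powr (d-1)" using powr_powr[of "real (2*k)" 2 "(d-1)/2"] by (simp only: times_divide_eq_right nonzero_mult_div_cancel_left zero_neq_numeral) 
    have e2: "real (2*k) powr 2 = real (2*k) ^ 2" using kpos by (simp add: powr_numeral)
    have "real (2*k) powr (d-1) = (real (2*k) ^ 2) powr ((d-1)/2)"
      using e1 e2 by (simp only:)
    also have "\<dots> \<ge> (8 * real n) powr ((d-1)/2)"
      using kk kpos d1 by (intro powr_mono2') auto
    finally show ?thesis .
  qed
  have "8 powr ((d-1)/2) * real n powr ((1-d)/2) = real n * (8 * real n) powr ((d-1)/2) / real n powr d"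
  proof -
    have "real n * (8 * real n) powr ((d-1)/2) / real n powr d
        = 8 powr ((d-1)/2) * (real n powr 1 * real n powr ((d-1)/2) / real n powr d)"
      using npos by (simp add: powr_mult)
    also have "real n powr 1 * real n powr ((d-1)/2) / real n powr d = real n powr ((1-d)/2)"
      by (simp only: powr_add[symmetric] powr_diff[symmetric]) (simp add: field_simps)
    finally show ?thesis by simp
  qed
  also have "\<dots> \<le> real n * real (2*k) powr (d-1) / real n powr d"
    using P1 npos by (intro divide_right_mono mult_left_mono) auto
  also have "\<dots> \<le> total_cost (\<lambda>x. real x powr d) n T s / total_cost (\<lambda>x. real x powr d) n T s'"
    unfolding C2 using C1 npos by (intro divide_right_mono) auto
  finally show ?thesis using V NE Fs' by blast
qed



theorem theorem1:
  fixes d :: real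
  assumes "0 < d" and "d < 1"
  shows "(\<lambda>n. worst_poa (\<lambda>x. real x powr d) n) \<in> \<Theta>(\<lambda>n. real n powr ((1 - d) / 2))"
proof (rule bigthetaI')
  show "8 powr ((d-1)/2) > (0::real)" by simp
  show "(4::real) > 0" by simp
  show "\<forall>\<^sub>F n in at_top. 8 powr ((d-1)/2) * norm (real n powr ((1 - d) / 2)) \<le> norm (worst_poa (\<lambda>x. real x powr d) n) \<and>
          norm (worst_poa (\<lambda>x. real x powr d) n) \<le> 4 * norm (real n powr ((1 - d) / 2))"
    using eventually_ge_at_top[of "1::nat"]
  proof eventually_elim
    case (elim n)
    define X where "X = {total_cost (\<lambda>x. real x powr d) n T s / total_cost (\<lambda>x. real x powr d) n T s' | T r dl s s'.
      valid_game n T r dl \<and> is_NE (\<lambda>x. real x powr d) n r dl s \<and> feasible n r dl s'}"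
    have W: "worst_poa (\<lambda>x. real x powr d) n = Sup X" unfolding worst_poa_def X_def by simp
    obtain T r dl s s' where ex: "valid_game n T r dl" "is_NE (\<lambda>x. real x powr d) n r dl s" "feasible n r dl s'"
      "8 powr ((d-1)/2) * real n powr ((1-d)/2) \<le> total_cost (\<lambda>x. real x powr d) n T s / total_cost (\<lambda>x. real x powr d) n T s'"
      using lower_example[OF assms elim] by blast
    have mem: "total_cost (\<lambda>x. real x powr d) n T s / total_cost (\<lambda>x. real x powr d) n T s' \<in> X"
      unfolding X_def using ex by blast
    have ub: "x \<le> 4 * real n powr ((1-d)/2)" if "x \<in> X" for x
      using that ratio_upper[OF assms] unfolding X_def by blast
    have bdd: "bdd_above X" using ub by (intro bdd_aboveI) 
    have up: "Sup X \<le> 4 * real n powr ((1-d)/2)" using mem ub by (intro cSup_least) auto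
    have lo: "8 powr ((d-1)/2) * real n powr ((1-d)/2) \<le> Sup X"
      using ex(4) cSup_upper[OF mem bdd] by linarith
    have "0 \<le> 8 powr ((d-1)/2) * real n powr ((1-d)/2)" by simp
    hence "0 \<le> Sup X" using lo by linarith
    thus ?case using up lo W by (simp add: abs_of_nonneg)
  qed
qed


end
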